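(* For each prime number $p$, there exists a self-similar $p$-adic fractal string $\mathcal{L}_p\subseteq\mathbb{Z}_p$ of Minkowski--Bouligand dimension $D=\frac{1}{2}$ and with oscillatory period $\mathbf{p}=\frac{\pi}{\log p}$; that is, the geometric zeta function of $\mathcal{L}_p$ has a meromorphic continuation to all of $\mathbb{C}$ whose set of poles (the complex dimensions of $\mathcal{L}_p$) is exactly $\{\frac12+in\frac{\pi}{\log p} : n\in\mathbb{Z}\}$, and $\frac12$ is the abscissa of convergence of the series defining the geometric zeta function.
   Context: Let $p$ be a prime and $\mathbb{Z}_p$ the ring of $p$-adic integers with the $p$-adic absolute value $|\cdot|_p$ ($|p|_p=p^{-1}$). A $p$-adic fractal string $\mathcal{L}$ in $\mathbb{Z}_p$ is a countable disjoint union of balls of the form $a+p^n\mathbb{Z}_p$ ($a\in\mathbb{Z}_p$, $n\geq 1$) contained in $\mathbb{Z}_p$; the ball $a+p^n\mathbb{Z}_p$ has length $p^{-n}$, and $\mathcal{L}$ is encoded by its sequence of lengths $l_j$ (counted with multiplicity). Its geometric zeta function is $\zeta_{\mathcal{L}}(s)=\sum_j l_j^s$, defined for $\Re(s)$ larger than the abscissa of convergence, and (when possible) meromorphically continued to $\mathbb{C}$. The complex dimensions of $\mathcal{L}$ are the poles of this meromorphic continuation. The Minkowski--Bouligand dimension $D$ of $\mathcal{L}$ is the abscissa of convergence of $\sum_j l_j^s$. $\mathcal{L}$ is said to have oscillatory period $\mathbf{p}>0$ if its set of complex dimensions is exactly $\{D+in\mathbf{p}: n\in\mathbb{Z}\}$.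 $\mathcal{L}$ is self-similar if it is the complement in $\mathbb{Z}_p$ of the unique nonempty compact set $K\subseteq\mathbb{Z}_p$ satisfying $K=\bigcup_{i}\phi_i(K)$ for a finite family of at least two similarity contractions $\phi_i(x)=c_i+p^{m}x$ of $\mathbb{Z}_p$ into itself (with $c_i\in\mathbb{Z}$, $m\ge1$). *)

theory Defs
  imports "HOL-Analysis.Analysis" "HOL-Complex_Analysis.Complex_Analysis"
begin

text \<open>The ring of p-adic integers, modelled as the inverse limit of the
rings Z/p^n Z: an element x is the sequence of its residues x n mod p^n
(0 <= x n < p^n), compatible under reduction. On nat => int the product
topology (int discrete) restricts to the p-adic topology on this set.\<close>

definition Zp :: "nat \<Rightarrow> (nat \<Rightarrow> int) set" where
  "Zp p = {x. \<forall>n. 0 \<le> x n \<and> x n < int p ^ n \<and> x (Suc n) mod (int p ^ n) = x n}"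

text \<open>The ball a + p^n Z_p (n >= 1) is determined by the residue r of a mod p^n;
it is encoded by the pair (n, r) with 0 <= r < p^n, and has length p^(-n).\<close>

definition padic_ball :: "nat \<Rightarrow> nat \<Rightarrow> int \<Rightarrow> (nat \<Rightarrow> int) set" where
  "padic_ball p n r = {x \<in> Zp p. x n = r}"

definition ball_codes :: "nat \<Rightarrow> (nat \<times> int) set" where
  "ball_codes p = {(n, r). 1 \<le> n \<and> 0 \<le> r \<and> r < int p ^ n}"

definition maximal_balls :: "nat \<Rightarrow> (nat \<Rightarrow> int) set \<Rightarrow> (nat \<times> int) set" where
  "maximal_balls p U = {(n, r) \<in> ball_codes p. padic_ball p n r \<subseteq> U \<and>
      \<not> (\<exists>(n', r') \<in> ball_codes p. n' < n \<and> padic_ball p n r \<subseteq> padic_ball p n' r'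
                                   \<and> padic_ball p n' r' \<subseteq> U)}"

definition padic_sim :: "nat \<Rightarrow> int \<Rightarrow> nat \<Rightarrow> (nat \<Rightarrow> int) \<Rightarrow> (nat \<Rightarrow> int)" where
  "padic_sim p c m x = (\<lambda>n. (c + int p ^ m * x (n - m)) mod (int p ^ n))"

definition ball_length :: "nat \<Rightarrow> nat \<times> int \<Rightarrow> real" where
  "ball_length p b = real p powr (- real (fst b))"

definition zeta_term :: "nat \<Rightarrow> complex \<Rightarrow> nat \<times> int \<Rightarrow> complex" where
  "zeta_term p s b = complex_of_real (ball_length p b) powr s"

end

theory Submission
  imports Defs
begin


lemma zdiv_lt_helper:
  fixes a b c :: int
  assumes "0 < b" "a < c * b"
  shows "a div b < c"
proof -
  have "a = a div b * b + a mod b" by simp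
  moreover have "a mod b \<ge> 0" using assms(1) by simp
  ultimately have "a div b * b < c * b" using assms(2) by linarith
  then show ?thesis using assms(1) by (simp add: mult_less_cancel_right)
qed

lemma Zp_bounds: "x \<in> Zp p \<Longrightarrow> 0 \<le> x n \<and> x n < int p ^ n"
  unfolding Zp_def by auto

lemma Zp_0: "x \<in> Zp p \<Longrightarrow> x 0 = 0"
  using Zp_bounds[of x p 0] by simp

lemma Zp_mod:
  assumes "x \<in> Zp p" "k \<le> n"
  shows "x n mod (int p ^ k) = x k"
  using assms(2)
proof (induction n)
  case 0
  then show ?case using Zp_0[OF assms(1)] by simp
next
  case (Suc n)
  show ?case
  proof (cases "k = Suc n")
    case True
    have "0 \<le> x k" "x k < int p ^ k" using Zp_bounds[OF assms(1), of k] by auto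
    then have "x k mod int p ^ k = x k" by (rule mod_pos_pos_trivial)
    then show ?thesis using True by simp
  next
    case False
    then have "k \<le> n" using Suc by simp
    have "x (Suc n) mod int p ^ k = (x (Suc n) mod int p ^ n) mod int p ^ k"
      using \<open>k \<le> n\<close> by (simp add: le_imp_power_dvd mod_mod_cancel)
    also have "\<dots> = x n mod int p ^ k" using assms(1) by (simp add: Zp_def)
    finally show ?thesis using Suc \<open>k \<le> n\<close> by simp
  qed
qed


lemma sim_Zp:
  assumes "p > 0" "y \<in> Zp p"
  shows "padic_sim p c m y \<in> Zp p"
proof -
  let ?q = "int p"
  have qpos: "?q ^ n > 0" for n using assms(1) by simp
  have compat: "(c + ?q ^ m * y (Suc n - m)) mod ?q ^ Suc n mod ?q ^ n
        = (c + ?q ^ m * y (n - m)) mod ?q ^ n" for n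
  proof -
    have "(c + ?q ^ m * y (Suc n - m)) mod ?q ^ Suc n mod ?q ^ n
        = (c + ?q ^ m * y (Suc n - m)) mod ?q ^ n"
      by (simp add: le_imp_power_dvd mod_mod_cancel)
    also have "\<dots> = (c + ?q ^ m * y (n - m)) mod ?q ^ n"
    proof (cases "n < m")
      case True
      then have "Suc n - m = n - m" by simp
      then show ?thesis by simp
    next
      case False
      then have e: "Suc n - m = Suc (n - m)" by simp
      define k where "k = n - m"
      have nk: "n = m + k" using False k_def by simp
      have "y (Suc k) = y (Suc k) mod ?q ^ k + ?q ^ k * (y (Suc k) div ?q ^ k)"
        by simp
      also have "y (Suc k) mod ?q ^ k = y k" using assms(2) by (simp add: Zp_def)
      finally have yk: "y (Suc k) = y k + ?q ^ k * (y (Suc k) div ?q ^ k)" .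
      have "c + ?q ^ m * y (Suc k) = (c + ?q ^ m * y k) + (y (Suc k) div ?q ^ k) * ?q ^ n"
        by (subst yk) (simp add: nk power_add algebra_simps)
      then have "(c + ?q ^ m * y (Suc k)) mod ?q ^ n = (c + ?q ^ m * y k) mod ?q ^ n"
        by (metis mod_mult_self1)
      then show ?thesis using e k_def by simp
    qed
    finally show ?thesis .
  qed
  show ?thesis unfolding Zp_def padic_sim_def
    using qpos compat by (auto simp: pos_mod_bound pos_mod_sign)
qed

definition Kset :: "nat \<Rightarrow> (nat \<Rightarrow> int) set" where
  "Kset p = {x \<in> Zp p. \<forall>j. x (2*j+2) = x (2*j+1)}"

lemma sim_K_01:
  assumes "p > 0" "y \<in> Zp p" "0 \<le> i" "i < int p"
  shows "padic_sim p i 2 y 2 = padic_sim p i 2 y 1"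
proof -
  have "i < int p ^ 2" using assms by (smt (verit) one_le_power power2_eq_square mult_le_cancel_left1 of_nat_0_less_iff)
  then show ?thesis using assms Zp_0[OF assms(2)] unfolding padic_sim_def by simp
qed

lemma sim_K_step:
  assumes "p > 0" "y \<in> Zp p" "0 \<le> i" "i < int p" "y (2*j+2) = y (2*j+1)"
  shows "padic_sim p i 2 y (2*j+4) = padic_sim p i 2 y (2*j+3)"
proof -
  let ?q = "int p"
  define v where "v = y (2*j+1)"
  have v0: "0 \<le> v" and v1: "v < ?q ^ (2*j+1)" using Zp_bounds[OF assms(2), of "2*j+1"] unfolding v_def by blast+
  have "v \<le> ?q ^ (2*j+1) - 1" using v1 by simp
  then have "?q^2 * v \<le> ?q^2 * (?q ^ (2*j+1) - 1)" by (simp add: mult_left_mono)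
  also have "\<dots> = ?q ^ (2*j+3) - ?q^2"
  proof -
    have "(2::nat) + (2*j+1) = 2*j+3" by simp
    then have "?q^2 * ?q^(2*j+1) = ?q^(2*j+3)" by (metis power_add)
    then show ?thesis by (simp add: right_diff_distrib)
  qed
  finally have a: "?q^2 * v \<le> ?q ^ (2*j+3) - ?q^2" .
  have "?q \<le> ?q^2" using assms(1) by (simp add: power2_eq_square)
  then have lt: "i + ?q^2 * v < ?q ^ (2*j+3)" using a assms(4) by linarith
  have lt2: "?q ^ (2*j+3) \<le> ?q ^ (2*j+4)" using assms(1) by (intro power_increasing) auto
  have nn: "0 \<le> i + ?q^2 * v" using v0 assms(3) by simp
  have e1: "2*j+4-2 = 2*j+2" "2*j+3-2 = 2*j+1" by auto
  show ?thesis unfolding padic_sim_def e1 using assms(5) v_def lt lt2 nn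
    by simp
qed

lemma sim_K:
  assumes "p > 0" "y \<in> Kset p" "0 \<le> i" "i < int p"
  shows "padic_sim p i 2 y \<in> Kset p"
proof -
  have yZ: "y \<in> Zp p" using assms(2) by (simp add: Kset_def)
  have "padic_sim p i 2 y (2*j+2) = padic_sim p i 2 y (2*j+1)" for j
  proof (cases j)
    case 0
    then show ?thesis using sim_K_01[OF assms(1) yZ assms(3,4)] by (simp add: numeral_2_eq_2)
  next
    case (Suc j')
    have yj: "y (2*j'+2) = y (2*j'+1)" using assms(2) by (simp add: Kset_def)
    have e: "2*j+2 = 2*j'+4" "2*j+1 = 2*j'+3" using Suc by auto
    from sim_K_step[OF assms(1) yZ assms(3,4) yj] show ?thesis
      by (simp only: e)
  qed
  then show ?thesis using sim_Zp[OF assms(1) yZ] by (simp add: Kset_def)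
qed

definition shift2 :: "nat \<Rightarrow> (nat \<Rightarrow> int) \<Rightarrow> (nat \<Rightarrow> int)" where
  "shift2 p x = (\<lambda>n. x (n+2) div (int p ^ 2))"

lemma K_decomp:
  assumes "p > 0" "x \<in> Kset p"
  shows "shift2 p x \<in> Kset p" "x = padic_sim p (x 1) 2 (shift2 p x)" "0 \<le> x 1" "x 1 < int p"
proof -
  let ?q = "int p"
  have xZ: "x \<in> Zp p" using assms(2) by (simp add: Kset_def)
  have xK: "x (2*j+2) = x (2*j+1)" for j using assms(2) by (simp add: Kset_def)
  show "0 \<le> x 1" "x 1 < int p" using Zp_bounds[OF xZ, of 1] by auto
  have q2: "?q ^ 2 > 0" using assms(1) by simp
  have sZ: "shift2 p x \<in> Zp p"
    unfolding Zp_def shift2_def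
  proof (intro CollectI allI conjI)
    fix n
    show "0 \<le> x (n + 2) div ?q ^ 2" using Zp_bounds[OF xZ, of "n+2"] q2 by (simp add: pos_imp_zdiv_nonneg_iff del: power_Suc)
    have "x (n+2) < ?q ^ n * ?q ^ 2" using Zp_bounds[OF xZ, of "n+2"] by (metis power_add)
    then show "x (n + 2) div ?q ^ 2 < ?q ^ n" using q2
      by (rule zdiv_lt_helper[rotated])
    have "x (Suc n + 2) = x (n+2) + ?q ^ (n+2) * (x (Suc n + 2) div ?q ^ (n+2))"
      using Zp_mod[OF xZ, of "n+2" "Suc n + 2"] by (metis le_add_same_cancel1 mod_mult_div_eq
          add.commute le_SucI order_refl add_Suc)
    then have "x (Suc n + 2) = x (n+2) + (?q ^ n * (x (Suc n + 2) div ?q ^ (n+2))) * ?q^2"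
      by (simp only: power_add ac_simps)
    then have "x (Suc n + 2) div ?q^2 = x (n+2) div ?q^2 + ?q ^ n * (x (Suc n + 2) div ?q ^ (n+2))"
      using q2 by (metis div_mult_self1 add.commute less_irrefl)
    moreover have "0 \<le> x (n+2) div ?q^2" "x (n+2) div ?q^2 < ?q ^ n"
      using Zp_bounds[OF xZ, of "n+2"] q2
      by (auto simp: pos_imp_zdiv_nonneg_iff power2_eq_square ac_simps intro!: zdiv_lt_helper)
    ultimately show "x (Suc n + 2) div ?q ^ 2 mod ?q ^ n = x (n + 2) div ?q ^ 2"
      by simp
  qed
  show "shift2 p x \<in> Kset p"
    using sZ xK[of "Suc j" for j] by (simp add: Kset_def shift2_def add.commute)
  show "x = padic_sim p (x 1) 2 (shift2 p x)"
  proof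
    fix n
    show "x n = padic_sim p (x 1) 2 (shift2 p x) n"
    proof (cases "n < 2")
      case True
      then consider "n = 0" | "n = 1" by linarith
      then show ?thesis
      proof cases
        case 1 then show ?thesis using Zp_0[OF xZ] by (simp add: padic_sim_def)
      next
        case 2
        have "x 1 mod ?q = x 1" using Zp_bounds[OF xZ, of 1] by simp
        with 2 show ?thesis using Zp_0[OF sZ] by (simp add: padic_sim_def)
      qed
    next
      case False
      then have nn: "n - 2 + 2 = n" "Suc (Suc (n - 2)) = n" by simp_all
      have "x 2 = x 1" using xK[of 0] by (simp add: numeral_2_eq_2)
      then have m2: "x n mod ?q^2 = x 1" using Zp_mod[OF xZ, of 2 n] False by simp
      have "x 1 + ?q^2 * (x n div ?q^2) = x n" using m2 by (metis mod_mult_div_eq)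
      then have "padic_sim p (x 1) 2 (shift2 p x) n = x n mod ?q ^ n"
        using False by (simp add: padic_sim_def shift2_def nn)
      then show ?thesis using Zp_bounds[OF xZ, of n] by simp
    qed
  qed
qed


lemma K_eq_union:
  assumes "p > 0"
  shows "Kset p = (\<Union>i<p. padic_sim p (int i) 2 ` Kset p)"
proof
  show "(\<Union>i<p. padic_sim p (int i) 2 ` Kset p) \<subseteq> Kset p"
    using sim_K[OF assms] by auto
  show "Kset p \<subseteq> (\<Union>i<p. padic_sim p (int i) 2 ` Kset p)"
  proof
    fix x assume x: "x \<in> Kset p"
    note d = K_decomp[OF assms x]
    have lt: "nat (x 1) < p" and e: "int (nat (x 1)) = x 1" using d(3,4) by auto
    have "x = padic_sim p (int (nat (x 1))) 2 (shift2 p x)" unfolding e by (rule d(2))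
    then have "x \<in> padic_sim p (int (nat (x 1))) 2 ` Kset p" by (rule image_eqI[OF _ d(1)])
    then show "x \<in> (\<Union>i<p. padic_sim p (int i) 2 ` Kset p)" using lt by blast
  qed
qed

lemma cont_coord_fun: "continuous_on UNIV (\<lambda>x::nat\<Rightarrow>int. g (x n) :: int)"
  by (rule continuous_on_compose2[OF Topological_Spaces.continuous_on_discrete continuous_on_product_coordinates]) auto

lemma closed_Kset: "closed (Kset p)"
proof -
  have eq: "Kset p = (\<Inter>n. {x. (if x n \<in> {0..<int p ^ n} then 1 else 0::int) = 1})
     \<inter> (\<Inter>n. {x. x (Suc n) mod int p ^ n = x n}) \<inter> (\<Inter>j. {x. x (2*j+2) = x (2*j+1)})"
    unfolding Kset_def Zp_def by auto
  have c1: "closed {x::nat\<Rightarrow>int. (if x n \<in> {0..<int p ^ n} then 1 else 0::int) = 1}" for n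
    by (rule closed_Collect_eq[OF cont_coord_fun continuous_on_const])
  have c2: "closed {x::nat\<Rightarrow>int. x (Suc n) mod int p ^ n = x n}" for n
    by (rule closed_Collect_eq[OF cont_coord_fun continuous_on_product_coordinates])
  have c3: "closed {x::nat\<Rightarrow>int. x (2*j+2) = x (2*j+1)}" for j
    by (rule closed_Collect_eq[OF continuous_on_product_coordinates continuous_on_product_coordinates])
  show ?thesis unfolding eq
    by (intro closed_Int closed_INT ballI c1 c2 c3)
qed

lemma compact_box: "compact (PiE UNIV (\<lambda>n. {0..<int p ^ n}))"
proof -
  have "compactin (product_topology (\<lambda>_. euclidean) UNIV) (PiE UNIV (\<lambda>n. {0..<int p ^ n}))"
    unfolding compactin_PiE by (auto intro: finite_imp_compact)
  then show ?thesis by (simp add: euclidean_product_topology)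
qed

lemma compact_Kset: "compact (Kset p)"
proof -
  have "Kset p = PiE UNIV (\<lambda>n. {0..<int p ^ n}) \<inter> Kset p"
    unfolding Kset_def Zp_def by (auto simp: PiE_def)
  then show ?thesis using compact_box closed_Kset by (metis compact_Int_closed)
qed

lemma Hausdorff_int: "Hausdorff_space (euclidean :: int topology)"
  unfolding Hausdorff_space_def
proof (intro allI impI)
  fix x y :: int assume "x \<in> topspace euclidean \<and> y \<in> topspace euclidean \<and> x \<noteq> y"
  then show "\<exists>U V. openin euclidean U \<and> openin euclidean V \<and> x \<in> U \<and> y \<in> V \<and> disjnt U V"
    by (intro exI[of _ "{x}"] exI[of _ "{y}"]) (auto simp: open_discrete disjnt_def simp flip: open_openin)
qed

lemma compact_closed_fun:
  assumes "compact (S :: (nat \<Rightarrow> int) set)"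
  shows "closed S"
proof -
  have "compactin euclidean S" using assms by (simp only: compactin_euclidean_iff)
  then have "compactin (product_topology (\<lambda>_. euclidean) UNIV) S"
    by (simp only: euclidean_product_topology)
  moreover have "Hausdorff_space (product_topology (\<lambda>_::nat. (euclidean :: int topology)) UNIV)"
    unfolding Hausdorff_space_product_topology using Hausdorff_int by blast
  ultimately have "closedin (product_topology (\<lambda>_. euclidean) UNIV) S"
    using compactin_imp_closedin by blast
  then have "closedin euclidean S" by (simp only: euclidean_product_topology)
  then show ?thesis by (simp only: closed_closedin)
qed

lemma tendsto_fun_coord:
  fixes y :: "nat \<Rightarrow> nat \<Rightarrow> int"
  assumes "\<And>i. eventually (\<lambda>k. y k i = x i) sequentially"
  shows "y \<longlonglongrightarrow> x"
proof -
  have "limitin euclidean (\<lambda>k. y k i) (x i) sequentially" for i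
    unfolding limitin_canonical_iff using assms by (rule tendsto_eventually)
  then have "limitin (product_topology (\<lambda>_. euclidean) UNIV) y x sequentially"
    unfolding limitin_componentwise by simp
  then have "limitin euclidean y x sequentially" by (simp only: euclidean_product_topology)
  then show ?thesis by (simp only: limitin_canonical_iff)
qed

lemma unique_K:
  assumes "p > 0" "K' \<subseteq> Zp p" "K' \<noteq> {}" "compact K'"
    "K' = (\<Union>i<p. padic_sim p (int i) 2 ` K')"
  shows "K' = Kset p"
proof
  have img: "y \<in> K' \<Longrightarrow> i < p \<Longrightarrow> padic_sim p (int i) 2 y \<in> K'" for y i
    using assms(5) by blast
  have pre: "x \<in> K' \<Longrightarrow> \<exists>i y. i < p \<and> y \<in> K' \<and> x = padic_sim p (int i) 2 y" for x
    using assms(5) by blast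
  have "\<forall>x\<in>K'. x (2*j+2) = x (2*j+1)" for j
  proof (induction j)
    case 0
    show ?case
    proof
      fix x assume "x \<in> K'"
      then obtain i y where iy: "i < p" "y \<in> K'" "x = padic_sim p (int i) 2 y" using pre by blast
      then show "x (2*0+2) = x (2*0+1)"
        using sim_K_01[OF assms(1), of y "int i"] assms(2) by (auto simp: numeral_2_eq_2)
    qed
  next
    case (Suc j)
    show ?case
    proof
      fix x assume "x \<in> K'"
      then obtain i y where iy: "i < p" "y \<in> K'" "x = padic_sim p (int i) 2 y" using pre by blast
      have e: "2 * Suc j + 2 = 2*j+4" "2 * Suc j + 1 = 2*j+3" by auto
      show "x (2 * Suc j + 2) = x (2 * Suc j + 1)"
        unfolding e using sim_K_step[OF assms(1), of y "int i" j] iy Suc assms(2) by auto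
    qed
  qed
  then show "K' \<subseteq> Kset p" using assms(2) by (auto simp: Kset_def)
next
  have img: "y \<in> K' \<Longrightarrow> i < p \<Longrightarrow> padic_sim p (int i) 2 y \<in> K'" for y i
    using assms(5) by blast
  have approx: "\<forall>x\<in>Kset p. \<exists>y\<in>K'. \<forall>n\<le>2*k. y n = x n" for k
  proof (induction k)
    case 0
    obtain z where z: "z \<in> K'" using assms(3) by blast
    show ?case
    proof
      fix x assume "x \<in> Kset p"
      then have "x 0 = 0" using Zp_0 by (auto simp: Kset_def)
      moreover have "z 0 = 0" using Zp_0 z assms(2) by auto
      ultimately show "\<exists>y\<in>K'. \<forall>n\<le>2*0. y n = x n" using z by auto
    qed
  next
    case (Suc k)
    show ?case
    proof
      fix x assume x: "x \<in> Kset p"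
      note d = K_decomp[OF assms(1) x]
      obtain y' where y': "y' \<in> K'" "\<forall>n\<le>2*k. y' n = shift2 p x n" using Suc d(1) by blast
      have "nat (x 1) < p" "int (nat (x 1)) = x 1" using d(3,4) by auto
      then have yK: "padic_sim p (x 1) 2 y' \<in> K'" using img[OF y'(1), of "nat (x 1)"] by simp
      have "\<forall>n\<le>2 * Suc k. padic_sim p (x 1) 2 y' n = x n"
      proof (intro allI impI)
        fix n assume "n \<le> 2 * Suc k"
        then have "n - 2 \<le> 2 * k" by simp
        then have "y' (n-2) = shift2 p x (n-2)" using y'(2) by simp
        then have "padic_sim p (x 1) 2 y' n = padic_sim p (x 1) 2 (shift2 p x) n"
          by (simp add: padic_sim_def)
        also have "\<dots> = x n" using fun_cong[OF d(2), of n] by (rule sym)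
        finally show "padic_sim p (x 1) 2 y' n = x n" .
      qed
      then show "\<exists>y\<in>K'. \<forall>n\<le>2 * Suc k. y n = x n" using yK by blast
    qed
  qed
  show "Kset p \<subseteq> K'"
  proof
    fix x assume x: "x \<in> Kset p"
    have "\<forall>k. \<exists>yk. yk \<in> K' \<and> (\<forall>n\<le>2*k. yk n = x n)" using approx x by blast
    from choice[OF this] obtain y where y0: "\<forall>k. y k \<in> K' \<and> (\<forall>n\<le>2*k. y k n = x n)"
      by blast
    then have y: "\<And>k. y k \<in> K'" "\<And>k n. n \<le> 2*k \<Longrightarrow> y k n = x n" by auto
    have "y \<longlonglongrightarrow> x"
    proof (rule tendsto_fun_coord)
      fix i show "eventually (\<lambda>k. y k i = x i) sequentially"
        unfolding eventually_sequentially by (intro exI[of _ i]) (auto intro!: y(2))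
    qed
    then show "x \<in> K'" using closed_sequentially[of K' y x] compact_closed_fun[OF assms(4)] y(1) by blast
  qed
qed



lemma mod_pow_small:
  fixes r :: int
  assumes "p > 0" "0 \<le> r" "r < int p ^ n" "n \<le> k"
  shows "r mod int p ^ k = r"
proof -
  have "int p ^ n \<le> int p ^ k" using assms(1,4) by (intro power_increasing) auto
  then show ?thesis using assms(2,3) by simp
qed

lemma mod_mod_pow:
  fixes r :: int
  assumes "k \<le> n"
  shows "(r mod int p ^ n) mod int p ^ k = r mod int p ^ k"
  using assms by (simp add: le_imp_power_dvd mod_mod_cancel)

definition emb :: "nat \<Rightarrow> int \<Rightarrow> nat \<Rightarrow> int" where
  "emb p r = (\<lambda>k. r mod int p ^ k)"

definition bad :: "nat \<Rightarrow> int \<Rightarrow> bool" where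
  "bad p r = (\<exists>j. r mod int p ^ (2*j+2) \<noteq> r mod int p ^ (2*j+1))"

lemma emb_Zp: "p > 0 \<Longrightarrow> emb p r \<in> Zp p"
  unfolding emb_def Zp_def
proof (intro CollectI allI conjI)
  fix n assume "p > 0"
  then show "0 \<le> r mod int p ^ n" "r mod int p ^ n < int p ^ n" by auto
  show "r mod int p ^ Suc n mod int p ^ n = r mod int p ^ n" by (rule mod_mod_pow) simp
qed

lemma emb_K: "p > 0 \<Longrightarrow> emb p r \<in> Kset p \<longleftrightarrow> \<not> bad p r"
  using emb_Zp[of p r] unfolding Kset_def bad_def emb_def by auto

lemma emb_ball: "p > 0 \<Longrightarrow> (n, r) \<in> ball_codes p \<Longrightarrow> emb p r \<in> padic_ball p n r"
  unfolding padic_ball_def ball_codes_def using emb_Zp[of p r] by (auto simp: emb_def)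

lemma ball_sub_U:
  assumes "p > 0" "(n, r) \<in> ball_codes p"
  shows "padic_ball p n r \<subseteq> Zp p - Kset p \<longleftrightarrow> bad p r"
proof
  assume "padic_ball p n r \<subseteq> Zp p - Kset p"
  then have "emb p r \<notin> Kset p" using emb_ball[OF assms] by blast
  then show "bad p r" using emb_K[OF assms(1)] by blast
next
  assume "bad p r"
  then obtain j where j: "r mod int p ^ (2*j+2) \<noteq> r mod int p ^ (2*j+1)" unfolding bad_def by blast
  have r: "0 \<le> r" "r < int p ^ n" using assms(2) by (auto simp: ball_codes_def)
  have "2*j+2 \<le> n"
  proof (rule ccontr)
    assume "\<not> 2*j+2 \<le> n"
    then have "n \<le> 2*j+1" by simp
    have "r mod int p ^ (2*j+2) = r" by (rule mod_pow_small[OF assms(1) r]) (use \<open>n \<le> 2*j+1\<close> in simp)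
    moreover have "r mod int p ^ (2*j+1) = r" by (rule mod_pow_small[OF assms(1) r]) (use \<open>n \<le> 2*j+1\<close> in simp)
    ultimately show False using j by simp
  qed
  show "padic_ball p n r \<subseteq> Zp p - Kset p"
  proof
    fix x assume "x \<in> padic_ball p n r"
    then have x: "x \<in> Zp p" "x n = r" by (auto simp: padic_ball_def)
    have "x (2*j+2) = r mod int p ^ (2*j+2)" "x (2*j+1) = r mod int p ^ (2*j+1)"
      using Zp_mod[OF x(1), of "2*j+2" n] Zp_mod[OF x(1), of "2*j+1" n] x(2) \<open>2*j+2 \<le> n\<close> by auto
    then have "x (2*j+2) \<noteq> x (2*j+1)" using j by simp
    then have "x \<notin> Kset p" unfolding Kset_def by blast
    then show "x \<in> Zp p - Kset p" using x by blast
  qed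
qed

lemma ball_sub_ball:
  assumes "p > 0" "(n, r) \<in> ball_codes p" "n' \<le> n"
  shows "padic_ball p n r \<subseteq> padic_ball p n' r' \<longleftrightarrow> r' = r mod int p ^ n'"
proof
  assume "padic_ball p n r \<subseteq> padic_ball p n' r'"
  then have "emb p r \<in> padic_ball p n' r'" using emb_ball[OF assms(1,2)] by blast
  then show "r' = r mod int p ^ n'" by (simp add: padic_ball_def emb_def)
next
  assume e: "r' = r mod int p ^ n'"
  show "padic_ball p n r \<subseteq> padic_ball p n' r'"
  proof
    fix x assume "x \<in> padic_ball p n r"
    then have x: "x \<in> Zp p" "x n = r" by (auto simp: padic_ball_def)
    then have "x n' = r'" using Zp_mod[OF x(1) assms(3)] e by simp
    then show "x \<in> padic_ball p n' r'" using x by (simp add: padic_ball_def)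
  qed
qed

lemma L_char1:
  assumes "p > 0"
  shows "maximal_balls p (Zp p - Kset p) =
    {(n, r). (n, r) \<in> ball_codes p \<and> bad p r \<and> (\<forall>n'. 1 \<le> n' \<and> n' < n \<longrightarrow> \<not> bad p (r mod int p ^ n'))}"
proof -
  have ex: "(\<exists>(n', r') \<in> ball_codes p. n' < n \<and> padic_ball p n r \<subseteq> padic_ball p n' r'
                                   \<and> padic_ball p n' r' \<subseteq> Zp p - Kset p)
       \<longleftrightarrow> (\<exists>n'. 1 \<le> n' \<and> n' < n \<and> bad p (r mod int p ^ n'))"
    if nr: "(n, r) \<in> ball_codes p" for n r
  proof
    assume "\<exists>(n', r') \<in> ball_codes p. n' < n \<and> padic_ball p n r \<subseteq> padic_ball p n' r'
                                   \<and> padic_ball p n' r' \<subseteq> Zp p - Kset p"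
    then obtain n' r' where c: "(n', r') \<in> ball_codes p" "n' < n"
      "padic_ball p n r \<subseteq> padic_ball p n' r'" "padic_ball p n' r' \<subseteq> Zp p - Kset p" by blast
    have "r' = r mod int p ^ n'" using ball_sub_ball[OF assms nr, of n' r'] c by simp
    moreover have "bad p r'" using ball_sub_U[OF assms c(1)] c(4) by simp
    moreover have "1 \<le> n'" using c(1) by (simp add: ball_codes_def)
    ultimately show "\<exists>n'. 1 \<le> n' \<and> n' < n \<and> bad p (r mod int p ^ n')" using c(2) by blast
  next
    assume "\<exists>n'. 1 \<le> n' \<and> n' < n \<and> bad p (r mod int p ^ n')"
    then obtain n' where c: "1 \<le> n'" "n' < n" "bad p (r mod int p ^ n')" by blast
    have cd: "(n', r mod int p ^ n') \<in> ball_codes p" using c(1) assms by (simp add: ball_codes_def)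
    have "padic_ball p n r \<subseteq> padic_ball p n' (r mod int p ^ n')"
      using ball_sub_ball[OF assms nr, of n'] c(2) by simp
    moreover have "padic_ball p n' (r mod int p ^ n') \<subseteq> Zp p - Kset p"
      using ball_sub_U[OF assms cd] c(3) by simp
    ultimately show "\<exists>(n', r') \<in> ball_codes p. n' < n \<and> padic_ball p n r \<subseteq> padic_ball p n' r'
                                   \<and> padic_ball p n' r' \<subseteq> Zp p - Kset p" using cd c(2) by blast
  qed
  show ?thesis
  proof (rule set_eqI)
    fix x :: "nat \<times> int"
    obtain n r where x: "x = (n, r)" by fastforce
    have "(n, r) \<in> maximal_balls p (Zp p - Kset p) \<longleftrightarrow> (n, r) \<in> ball_codes p \<and> padic_ball p n r \<subseteq> Zp p - Kset p \<and>
      \<not> (\<exists>(n', r') \<in> ball_codes p. n' < n \<and> padic_ball p n r \<subseteq> padic_ball p n' r'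
                                   \<and> padic_ball p n' r' \<subseteq> Zp p - Kset p)"
      unfolding maximal_balls_def by (simp only: mem_Collect_eq case_prod_conv)
    also have "\<dots> \<longleftrightarrow> (n, r) \<in> ball_codes p \<and> bad p r \<and> (\<forall>n'. 1 \<le> n' \<and> n' < n \<longrightarrow> \<not> bad p (r mod int p ^ n'))"
      using ex[of n r] ball_sub_U[OF assms, of n r] by blast
    finally show "x \<in> maximal_balls p (Zp p - Kset p) \<longleftrightarrow> x \<in> {(n, r). (n, r) \<in> ball_codes p \<and> bad p r \<and> (\<forall>n'. 1 \<le> n' \<and> n' < n \<longrightarrow> \<not> bad p (r mod int p ^ n'))}"
      unfolding x by simp
  qed
qed

definition Rset :: "nat \<Rightarrow> nat \<Rightarrow> int set" where
  "Rset p j = {r. 0 \<le> r \<and> r < int p ^ (2*j+2) \<and> (\<forall>i<j. r mod int p ^ (2*i+2) = r mod int p ^ (2*i+1))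
      \<and> r mod int p ^ (2*j+2) \<noteq> r mod int p ^ (2*j+1)}"

definition psi :: "nat \<times> int \<Rightarrow> nat \<times> int" where
  "psi = (\<lambda>(j, r). (2*j+2, r))"

lemma inj_psi: "inj_on psi A"
  unfolding psi_def inj_on_def by auto

lemma L_char2:
  assumes "p > 0"
  shows "maximal_balls p (Zp p - Kset p) = psi ` (SIGMA j:UNIV. Rset p j)"
proof -
  let ?q = "int p"
  have "(n, r) \<in> psi ` (SIGMA j:UNIV. Rset p j)"
    if nr: "(n, r) \<in> ball_codes p" "bad p r" "\<forall>n'. 1 \<le> n' \<and> n' < n \<longrightarrow> \<not> bad p (r mod ?q ^ n')"
    for n r
  proof -
    have r: "0 \<le> r" "r < ?q ^ n" "1 \<le> n" using nr(1) by (auto simp: ball_codes_def)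
    define P where "P = (\<lambda>j. r mod ?q ^ (2*j+2) \<noteq> r mod ?q ^ (2*j+1))"
    obtain j0 where "P j0" using nr(2) unfolding bad_def P_def by blast
    define j where "j = (LEAST j. P j)"
    have Pj: "P j" unfolding j_def by (rule LeastI[of P j0]) fact
    have notP: "\<not> P i" if "i < j" for i using not_less_Least[of i P] that j_def by blast
    have "2*j+2 \<le> n"
    proof (rule ccontr)
      assume "\<not> 2*j+2 \<le> n"
      then have "n \<le> 2*j+1" by simp
      have "r mod ?q ^ (2*j+2) = r" by (rule mod_pow_small[OF assms r(1,2)]) (use \<open>n \<le> 2*j+1\<close> in simp)
      moreover have "r mod ?q ^ (2*j+1) = r" by (rule mod_pow_small[OF assms r(1,2)]) (use \<open>n \<le> 2*j+1\<close> in simp)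
      ultimately show False using Pj by (simp add: P_def)
    qed
    moreover have "\<not> 2*j+2 < n"
    proof
      assume lt: "2*j+2 < n"
      have "bad p (r mod ?q ^ (2*j+2))"
      proof -
        have "(r mod ?q ^ (2*j+2)) mod ?q ^ (2*j+1) = r mod ?q ^ (2*j+1)" by (rule mod_mod_pow) simp
        then show ?thesis unfolding bad_def using Pj by (intro exI[of _ j]) (simp add: P_def)
      qed
      then show False using nr(3) lt by auto
    qed
    ultimately have n: "n = 2*j+2" by simp
    have "r \<in> Rset p j" unfolding Rset_def using r n Pj notP by (auto simp: P_def)
    then show ?thesis unfolding psi_def using n by (auto intro!: image_eqI[of _ _ "(j, r)"])
  qed
  moreover have "(n, r) \<in> ball_codes p \<and> bad p r \<and> (\<forall>n'. 1 \<le> n' \<and> n' < n \<longrightarrow> \<not> bad p (r mod ?q ^ n'))"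
    if "(n, r) \<in> psi ` (SIGMA j:UNIV. Rset p j)" for n r
  proof -
    from that obtain j r0 where jr: "r0 \<in> Rset p j" "(n, r) = psi (j, r0)" by blast
    then have n: "n = 2*j+2" and rR: "r \<in> Rset p j" by (auto simp: psi_def)
    have r: "0 \<le> r" "r < ?q ^ (2*j+2)" "\<forall>i<j. r mod ?q ^ (2*i+2) = r mod ?q ^ (2*i+1)"
      "r mod ?q ^ (2*j+2) \<noteq> r mod ?q ^ (2*j+1)" using rR by (auto simp: Rset_def)
    have "(n, r) \<in> ball_codes p" using r n by (simp add: ball_codes_def)
    moreover have "bad p r" using r(4) unfolding bad_def by blast
    moreover have "\<not> bad p (r mod ?q ^ n')" if n': "1 \<le> n'" "n' < n" for n'
    proof
      assume "bad p (r mod ?q ^ n')"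
      then obtain i where i: "(r mod ?q ^ n') mod ?q ^ (2*i+2) \<noteq> (r mod ?q ^ n') mod ?q ^ (2*i+1)"
        unfolding bad_def by blast
      have s: "0 \<le> r mod ?q ^ n'" "r mod ?q ^ n' < ?q ^ n'" using assms by auto
      have "2*i+2 \<le> n'"
      proof (rule ccontr)
        assume "\<not> 2*i+2 \<le> n'"
        then have "n' \<le> 2*i+1" by simp
        have "r mod ?q ^ n' mod ?q ^ (2*i+2) = r mod ?q ^ n'" by (rule mod_pow_small[OF assms s]) (use \<open>n' \<le> 2*i+1\<close> in simp)
        moreover have "r mod ?q ^ n' mod ?q ^ (2*i+1) = r mod ?q ^ n'" by (rule mod_pow_small[OF assms s]) (use \<open>n' \<le> 2*i+1\<close> in simp)
        ultimately show False using i by simp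
      qed
      then have "i < j" using n' n by simp
      moreover have "r mod ?q ^ (2*i+2) \<noteq> r mod ?q ^ (2*i+1)"
      proof -
        have "r mod ?q ^ n' mod ?q ^ (2*i+2) = r mod ?q ^ (2*i+2)"
          by (rule mod_mod_pow) (use \<open>2*i+2 \<le> n'\<close> in simp)
        moreover have "r mod ?q ^ n' mod ?q ^ (2*i+1) = r mod ?q ^ (2*i+1)"
          by (rule mod_mod_pow) (use \<open>2*i+2 \<le> n'\<close> in simp)
        ultimately show ?thesis using i by simp
      qed
      ultimately show False using r(3) by blast
    qed
    ultimately show ?thesis by blast
  qed
  ultimately show ?thesis unfolding L_char1[OF assms]
  proof (intro set_eqI)
    fix x :: "nat \<times> int"
    obtain n r where x: "x = (n, r)" by fastforce
    assume h1: "\<And>n r. (n, r) \<in> ball_codes p \<Longrightarrow> bad p r \<Longrightarrow> \<forall>n'. 1 \<le> n' \<and> n' < n \<longrightarrow> \<not> bad p (r mod ?q ^ n')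
      \<Longrightarrow> (n, r) \<in> psi ` (SIGMA j:UNIV. Rset p j)"
    assume h2: "\<And>n r. (n, r) \<in> psi ` (SIGMA j:UNIV. Rset p j) \<Longrightarrow> (n, r) \<in> ball_codes p \<and> bad p r \<and> (\<forall>n'. 1 \<le> n' \<and> n' < n \<longrightarrow> \<not> bad p (r mod ?q ^ n'))"
    show "x \<in> {(n, r). (n, r) \<in> ball_codes p \<and> bad p r \<and> (\<forall>n'. 1 \<le> n' \<and> n' < n \<longrightarrow> \<not> bad p (r mod int p ^ n'))}
       \<longleftrightarrow> x \<in> psi ` (SIGMA j:UNIV. Rset p j)"
      unfolding x using h1[of n r] h2[of n r] by blast
  qed
qed



lemma card_lift:
  fixes Q M :: int and A :: "int set"
  assumes "Q > 0" "M \<ge> 0" "A \<subseteq> {0..<Q}"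
  shows "card {r. 0 \<le> r \<and> r < Q*M \<and> r mod Q \<in> A} = card A * nat M"
proof -
  let ?S = "{r. 0 \<le> r \<and> r < Q*M \<and> r mod Q \<in> A}"
  have "bij_betw (\<lambda>r. (r mod Q, r div Q)) ?S (A \<times> {0..<M})"
  proof (rule bij_betw_byWitness[where f' = "\<lambda>(a, d). a + Q * d"])
    show "\<forall>r\<in>?S. (\<lambda>(a, d). a + Q * d) (r mod Q, r div Q) = r" by simp
    show "\<forall>x\<in>A \<times> {0..<M}. (\<lambda>r. (r mod Q, r div Q)) ((\<lambda>(a, d). a + Q * d) x) = x"
    proof
      fix x assume "x \<in> A \<times> {0..<M}"
      then obtain a d where x: "x = (a, d)" "a \<in> A" by blast
      then have a: "0 \<le> a" "a < Q" using assms(3) by auto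
      have "(a + Q * d) mod Q = a" using a by (simp add: add.commute)
      moreover have "(a + Q * d) div Q = d" using a assms(1) by (simp add: add.commute)
      ultimately show "(\<lambda>r. (r mod Q, r div Q)) ((\<lambda>(a, d). a + Q * d) x) = x" using x by simp
    qed
    show "(\<lambda>r. (r mod Q, r div Q)) ` ?S \<subseteq> A \<times> {0..<M}"
    proof
      fix y assume "y \<in> (\<lambda>r. (r mod Q, r div Q)) ` ?S"
      then obtain r where r: "0 \<le> r" "r < Q*M" "r mod Q \<in> A" "y = (r mod Q, r div Q)" by blast
      have "0 \<le> r div Q" using r(1) assms(1) by (simp add: pos_imp_zdiv_nonneg_iff)
      moreover have "r div Q < M" using r(2) assms(1) by (intro zdiv_lt_helper) (auto simp: mult.commute)
      ultimately show "y \<in> A \<times> {0..<M}" using r by auto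
    qed
    show "(\<lambda>(a, d). a + Q * d) ` (A \<times> {0..<M}) \<subseteq> ?S"
    proof
      fix y assume "y \<in> (\<lambda>(a, d). a + Q * d) ` (A \<times> {0..<M})"
      then obtain a d where y: "y = a + Q * d" "a \<in> A" "0 \<le> d" "d < M" by auto
      then have a: "0 \<le> a" "a < Q" using assms(3) by auto
      have "Q * d \<le> Q * (M - 1)" using y(4) assms(1) by (intro mult_left_mono) auto
      then have "y < Q * M" using y(1) a by (simp add: algebra_simps)
      moreover have "0 \<le> y" using y a assms(1) by simp
      moreover have "y mod Q = a" using y(1) a by (simp add: add.commute)
      ultimately show "y \<in> ?S" using y(2) by simp
    qed
  qed
  then have "card ?S = card (A \<times> {0..<M})" by (rule bij_betw_same_card)
  also have "\<dots> = card A * nat M" by (simp add: card_cartesian_product)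
  finally show ?thesis .
qed

definition Aset :: "nat \<Rightarrow> nat \<Rightarrow> int set" where
  "Aset p j = {a. 0 \<le> a \<and> a < int p ^ (2*j) \<and> (\<forall>i<j. a mod int p ^ (2*i+2) = a mod int p ^ (2*i+1))}"

definition Cset :: "nat \<Rightarrow> nat \<Rightarrow> int set" where
  "Cset p j = {a. 0 \<le> a \<and> a < int p ^ (2*j+2) \<and> (\<forall>i<j. a mod int p ^ (2*i+2) = a mod int p ^ (2*i+1))}"

lemma cond_mod:
  "(\<forall>i<j. (r mod int p ^ (2*j)) mod int p ^ (2*i+2) = (r mod int p ^ (2*j)) mod int p ^ (2*i+1))
   \<longleftrightarrow> (\<forall>i<j. r mod int p ^ (2*i+2) = r mod int p ^ (2*i+1))"
proof -
  have "(r mod int p ^ (2*j)) mod int p ^ (2*i+2) = r mod int p ^ (2*i+2)"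
       "(r mod int p ^ (2*j)) mod int p ^ (2*i+1) = r mod int p ^ (2*i+1)" if "i < j" for i
    by (rule mod_mod_pow, use that in simp)+
  then show ?thesis by auto
qed

lemma mod_eq_self_iff:
  fixes r Q :: int
  assumes "0 \<le> r" "Q > 0"
  shows "r mod Q = r \<longleftrightarrow> r < Q"
proof
  assume "r mod Q = r"
  then show "r < Q" using pos_mod_bound[OF assms(2), of r] by simp
qed (use assms in simp)

lemma Aset_lift:
  assumes "p > 0"
  shows "{r. 0 \<le> r \<and> r < int p ^ (2*j) * M \<and> r mod int p ^ (2*j) \<in> Aset p j}
       = {r. 0 \<le> r \<and> r < int p ^ (2*j) * M \<and> (\<forall>i<j. r mod int p ^ (2*i+2) = r mod int p ^ (2*i+1))}"
proof -
  have "r mod int p ^ (2*j) \<in> Aset p j \<longleftrightarrow> (\<forall>i<j. r mod int p ^ (2*i+2) = r mod int p ^ (2*i+1))" for r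
    unfolding Aset_def using assms cond_mod[of j r p] by simp
  then show ?thesis by auto
qed

lemma Aset_sub: "p > 0 \<Longrightarrow> Aset p j \<subseteq> {0..<int p ^ (2*j)}"
  unfolding Aset_def by auto

lemma card_Aset: "p > 0 \<Longrightarrow> card (Aset p j) = p ^ j"
proof (induction j)
  case 0
  have "Aset p 0 = {0}" unfolding Aset_def by auto
  then show ?case by simp
next
  case (Suc j)
  let ?q = "int p"
  have "Aset p (Suc j) = {r. 0 \<le> r \<and> r < ?q ^ (2*j) * ?q \<and> (\<forall>i<j. r mod ?q ^ (2*i+2) = r mod ?q ^ (2*i+1))}"
  proof (intro set_eqI iffI)
    fix r assume "r \<in> Aset p (Suc j)"
    then have r: "0 \<le> r" "r < ?q ^ (2*j+2)" "\<forall>i<Suc j. r mod ?q ^ (2*i+2) = r mod ?q ^ (2*i+1)"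
      by (auto simp: Aset_def)
    have "r mod ?q ^ (2*j+2) = r" using r(1,2) by simp
    moreover have "r mod ?q ^ (2*j+2) = r mod ?q ^ (2*j+1)" using r(3) by simp
    ultimately have "r mod ?q ^ (2*j+1) = r" by simp
    then have "r < ?q ^ (2*j+1)" using mod_eq_self_iff[OF r(1), of "?q ^ (2*j+1)"] Suc.prems by simp
    then show "r \<in> {r. 0 \<le> r \<and> r < ?q ^ (2*j) * ?q \<and> (\<forall>i<j. r mod ?q ^ (2*i+2) = r mod ?q ^ (2*i+1))}"
      using r by (auto simp: mult.commute)
  next
    fix r assume "r \<in> {r. 0 \<le> r \<and> r < ?q ^ (2*j) * ?q \<and> (\<forall>i<j. r mod ?q ^ (2*i+2) = r mod ?q ^ (2*i+1))}"
    then have r: "0 \<le> r" "r < ?q ^ (2*j+1)" "\<forall>i<j. r mod ?q ^ (2*i+2) = r mod ?q ^ (2*i+1)"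
      by (auto simp: mult.commute)
    have "?q ^ (2*j+1) \<le> ?q ^ (2*j+2)" using Suc.prems by (intro power_increasing) auto
    then have "r mod ?q ^ (2*j+2) = r" "r mod ?q ^ (2*j+1) = r" using r by auto
    then have "\<forall>i<Suc j. r mod ?q ^ (2*i+2) = r mod ?q ^ (2*i+1)" using r(3) less_Suc_eq by auto
    then show "r \<in> Aset p (Suc j)" using r \<open>?q ^ (2*j+1) \<le> ?q ^ (2*j+2)\<close> unfolding Aset_def by auto
  qed
  also have "\<dots> = {r. 0 \<le> r \<and> r < ?q ^ (2*j) * ?q \<and> r mod ?q ^ (2*j) \<in> Aset p j}"
    using Aset_lift[OF Suc.prems, of j "?q"] by simp
  also have "card \<dots> = card (Aset p j) * nat ?q"
    by (rule card_lift) (use Suc.prems Aset_sub in auto)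
  finally show ?case using Suc by simp
qed

lemma card_Cset: "p > 0 \<Longrightarrow> card (Cset p j) = p ^ (j+2)"
proof -
  assume p: "p > 0"
  let ?q = "int p"
  have "Cset p j = {r. 0 \<le> r \<and> r < ?q ^ (2*j) * ?q^2 \<and> (\<forall>i<j. r mod ?q ^ (2*i+2) = r mod ?q ^ (2*i+1))}"
  proof -
    have e: "?q^(2*j+2) = ?q^(2*j)*?q^2" by (simp add: power_add power2_eq_square)
    show ?thesis by (simp only: Cset_def e)
  qed
  also have "\<dots> = {r. 0 \<le> r \<and> r < ?q ^ (2*j) * ?q^2 \<and> r mod ?q ^ (2*j) \<in> Aset p j}"
    using Aset_lift[OF p, of j "?q^2"] by simp
  also have "card \<dots> = card (Aset p j) * nat (?q^2)"
    by (rule card_lift) (use p Aset_sub in auto)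
  moreover have "nat (?q^2) = p^2" by (simp add: nat_power_eq)
  ultimately show ?thesis using card_Aset[OF p] by (simp add: power_add power2_eq_square)
qed

lemma card_Rset:
  assumes "p > 0"
  shows "card (Rset p j) = (p - 1) * p ^ (j+1)" "finite (Rset p j)"
proof -
  let ?q = "int p"
  have fin: "finite (Cset p j)" unfolding Cset_def by (rule finite_subset[of _ "{0..<?q ^ (2*j+2)}"]) auto
  have eqA: "{r \<in> Cset p j. r < ?q ^ (2*j+1)} = Aset p (Suc j)"
  proof (intro set_eqI iffI)
    fix r assume "r \<in> {r \<in> Cset p j. r < ?q ^ (2*j+1)}"
    then have r: "0 \<le> r" "r < ?q ^ (2*j+1)" "r < ?q ^ (2*j+2)" "\<forall>i<j. r mod ?q ^ (2*i+2) = r mod ?q ^ (2*i+1)"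
      by (auto simp: Cset_def)
    then have "r mod ?q ^ (2*j+2) = r" "r mod ?q ^ (2*j+1) = r" by auto
    then have "\<forall>i<Suc j. r mod ?q ^ (2*i+2) = r mod ?q ^ (2*i+1)" using r(4) less_Suc_eq by auto
    then show "r \<in> Aset p (Suc j)" using r unfolding Aset_def by auto
  next
    fix r assume "r \<in> Aset p (Suc j)"
    then have r: "0 \<le> r" "r < ?q ^ (2*j+2)" "\<forall>i<Suc j. r mod ?q ^ (2*i+2) = r mod ?q ^ (2*i+1)"
      by (auto simp: Aset_def)
    have "r mod ?q ^ (2*j+2) = r" using r(1,2) by simp
    moreover have "r mod ?q ^ (2*j+2) = r mod ?q ^ (2*j+1)" using r(3) by simp
    ultimately have "r mod ?q ^ (2*j+1) = r" by simp
    then have "r < ?q ^ (2*j+1)" using mod_eq_self_iff[OF r(1), of "?q ^ (2*j+1)"] assms by simp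
    then show "r \<in> {r \<in> Cset p j. r < ?q ^ (2*j+1)}" using r unfolding Cset_def by auto
  qed
  have eqR: "{r \<in> Cset p j. \<not> r < ?q ^ (2*j+1)} = Rset p j"
  proof (intro set_eqI)
    fix r
    show "r \<in> {r \<in> Cset p j. \<not> r < ?q ^ (2*j+1)} \<longleftrightarrow> r \<in> Rset p j"
    proof (cases "0 \<le> r \<and> r < ?q ^ (2*j+2)")
      case True
      then have "r mod ?q ^ (2*j+2) = r" by auto
      moreover have "r mod ?q ^ (2*j+1) = r \<longleftrightarrow> r < ?q ^ (2*j+1)"
        using mod_eq_self_iff[of r "?q ^ (2*j+1)"] True assms by simp
      ultimately show ?thesis unfolding Cset_def Rset_def using True by auto
    next
      case False
      then show ?thesis unfolding Cset_def Rset_def by auto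
    qed
  qed
  have "Cset p j = {r \<in> Cset p j. r < ?q ^ (2*j+1)} \<union> {r \<in> Cset p j. \<not> r < ?q ^ (2*j+1)}" by auto
  then have "card (Cset p j) = card {r \<in> Cset p j. r < ?q ^ (2*j+1)} + card {r \<in> Cset p j. \<not> r < ?q ^ (2*j+1)}"
    using fin by (metis (no_types, lifting) card_Un_disjoint finite_Un disjoint_iff mem_Collect_eq)
  then have "p ^ (j+2) = p ^ (j+1) + card (Rset p j)"
    using card_Cset[OF assms, of j] card_Aset[OF assms, of "Suc j"] eqA eqR by simp
  then show "card (Rset p j) = (p - 1) * p ^ (j+1)" by (simp add: algebra_simps diff_mult_distrib)
  show "finite (Rset p j)" using fin eqR by (metis finite_subset mem_Collect_eq subsetI)
qed



lemma sum_Sigma_level: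
  fixes h :: "nat \<Rightarrow> 'a::comm_semiring_1"
  assumes "p > 0"
  shows "(\<Sum>x\<in>(SIGMA j:{..<J}. Rset p j). h (fst x)) = (\<Sum>j<J. of_nat (card (Rset p j)) * h j)"
proof -
  have "(\<Sum>x\<in>(SIGMA j:{..<J}. Rset p j). h (fst x)) = (\<Sum>j<J. \<Sum>r\<in>Rset p j. h j)"
    by (subst sum.Sigma) (auto simp: card_Rset(2)[OF assms] case_prod_beta)
  also have "\<dots> = (\<Sum>j<J. of_nat (card (Rset p j)) * h j)" by simp
  finally show ?thesis .
qed

lemma real_level:
  assumes "p \<ge> 2"
  shows "real (card (Rset p j)) * (real p powr (- real (2*j+2))) powr \<sigma>
       = (real p - 1) * (real p powr (1 - 2*\<sigma>)) ^ (j+1)"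
proof -
  have p0: "real p > 0" using assms by simp
  have c: "real (card (Rset p j)) = (real p - 1) * real p ^ (j+1)"
    using card_Rset(1)[of p j] assms by (simp add: of_nat_diff)
  have "real p ^ (j+1) * (real p powr (- real (2*j+2))) powr \<sigma>
       = real p powr (real (j+1)) * real p powr (- real (2*j+2) * \<sigma>)"
    by (simp only: powr_realpow[symmetric, OF p0] powr_powr)
  also have "\<dots> = real p powr (real (j+1) * (1 - 2*\<sigma>))"
    using p0 by (simp add: powr_add[symmetric] algebra_simps)
  also have "\<dots> = real p powr ((1 - 2*\<sigma>) * real (j+1))" by (simp only: mult.commute)
  also have "\<dots> = (real p powr (1 - 2*\<sigma>)) powr real (j+1)" by (rule powr_powr[symmetric])
  also have "\<dots> = (real p powr (1 - 2*\<sigma>)) ^ (j+1)" by (rule powr_realpow) (use p0 in simp)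
  finally show ?thesis using c by (simp add: mult.assoc)
qed

lemma bl_psi: "ball_length p (psi (j, r)) = real p powr (- real (2*j+2))"
  by (simp add: ball_length_def psi_def)

lemma summable_real:
  assumes "p \<ge> 2" "\<sigma> > 1/2"
  shows "(\<lambda>b. ball_length p b powr \<sigma>) summable_on (psi ` (SIGMA j:UNIV. Rset p j))"
proof -
  have p0: "p > 0" using assms by simp
  define x where "x = real p powr (1 - 2*\<sigma>)"
  have x0: "0 \<le> x" and x1: "x < 1" unfolding x_def using assms by (auto intro!: powr_less_one)
  define g where "g = (\<lambda>j. (real p - 1) * x ^ (j+1))"
  have gs: "summable g" unfolding g_def using x0 x1
    by (intro summable_mult) (auto simp: summable_geometric)
  have g0: "0 \<le> g j" for j unfolding g_def using x0 assms by simp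
  let ?f = "(\<lambda>b. ball_length p b powr \<sigma>) \<circ> psi"
  have "?f summable_on (SIGMA j:UNIV. Rset p j)"
  proof (rule nonneg_bdd_above_summable_on)
    show "\<And>x. x \<in> (SIGMA j:UNIV. Rset p j) \<Longrightarrow> 0 \<le> ?f x" by simp
    show "bdd_above (sum ?f ` {F. F \<subseteq> (SIGMA j:UNIV. Rset p j) \<and> finite F})"
    proof (rule bdd_aboveI2)
      fix F assume F: "F \<in> {F. F \<subseteq> (SIGMA j:UNIV. Rset p j) \<and> finite F}"
      obtain J where J: "fst ` F \<subseteq> {..<J}" using F finite_nat_bounded[of "fst ` F"] by auto
      have FS: "F \<subseteq> (SIGMA j:{..<J}. Rset p j)" using F J by auto
      have finS: "finite (SIGMA j:{..<J}. Rset p j)" using card_Rset(2)[OF p0] by auto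
      have "sum ?f F \<le> sum ?f (SIGMA j:{..<J}. Rset p j)"
        by (rule sum_mono2[OF finS FS]) simp
      also have "\<dots> = (\<Sum>x\<in>(SIGMA j:{..<J}. Rset p j). (real p powr (- real (2*fst x+2))) powr \<sigma>)"
        by (intro sum.cong) (auto simp: bl_psi)
      also have "\<dots> = (\<Sum>j<J. real (card (Rset p j)) * (real p powr (- real (2*j+2))) powr \<sigma>)"
        using sum_Sigma_level[OF p0, of "\<lambda>j. (real p powr (- real (2*j+2))) powr \<sigma>" J] by simp
      also have "\<dots> = sum g {..<J}" unfolding g_def x_def using real_level[OF assms(1)] by simp
      also have "\<dots> \<le> suminf g" using gs g0 by (intro sum_le_suminf) auto
      finally show "sum ?f F \<le> suminf g" .
    qed
  qed
  then show ?thesis using summable_on_reindex[OF inj_psi] by blast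
qed

lemma not_summable_real:
  assumes "p \<ge> 2" "\<sigma> < 1/2"
  shows "\<not> (\<lambda>b. ball_length p b powr \<sigma>) summable_on (psi ` (SIGMA j:UNIV. Rset p j))"
proof
  assume "(\<lambda>b. ball_length p b powr \<sigma>) summable_on (psi ` (SIGMA j:UNIV. Rset p j))"
  then have sm: "((\<lambda>b. ball_length p b powr \<sigma>) \<circ> psi) summable_on (SIGMA j:UNIV. Rset p j)"
    using summable_on_reindex[OF inj_psi] by blast
  let ?f = "(\<lambda>b. ball_length p b powr \<sigma>) \<circ> psi"
  define S where "S = infsum ?f (SIGMA j:UNIV. Rset p j)"
  have p0: "p > 0" using assms by simp
  define x where "x = real p powr (1 - 2*\<sigma>)"
  have x1: "1 \<le> x" unfolding x_def using assms by (intro ge_one_powr_ge_zero) auto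
  have "real J \<le> S" for J
  proof -
    have finS: "finite (SIGMA j:{..<J}. Rset p j)" using card_Rset(2)[OF p0] by auto
    have "real J = (\<Sum>j<J. 1::real)" by simp
    also have "\<dots> \<le> (\<Sum>j<J. (real p - 1) * x ^ (j+1))"
    proof (rule sum_mono)
      fix j
      have "1 \<le> x ^ (j+1)" using x1 by (rule one_le_power)
      moreover have "1 \<le> real p - 1" using assms by simp
      ultimately show "1 \<le> (real p - 1) * x ^ (j+1)"
        by (metis mult_mono' mult_1_right zero_le_one order_trans)
    qed
    also have "\<dots> = (\<Sum>j<J. real (card (Rset p j)) * (real p powr (- real (2*j+2))) powr \<sigma>)"
      unfolding x_def using real_level[OF assms(1)] by simp
    also have "\<dots> = (\<Sum>x\<in>(SIGMA j:{..<J}. Rset p j). (real p powr (- real (2*fst x+2))) powr \<sigma>)"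
      using sum_Sigma_level[OF p0, of "\<lambda>j. (real p powr (- real (2*j+2))) powr \<sigma>" J] by simp
    also have "\<dots> = sum ?f (SIGMA j:{..<J}. Rset p j)"
      by (intro sum.cong) (auto simp: bl_psi)
    also have "\<dots> \<le> S" unfolding S_def
      by (rule finite_sum_le_infsum[OF sm finS]) auto
    finally show ?thesis .
  qed
  from this[of "nat (ceiling S) + 1"] show False by linarith
qed



definition wfun :: "nat \<Rightarrow> complex \<Rightarrow> complex" where
  "wfun p s = exp ((1 - 2 * s) * of_real (ln (real p)))"

definition Ffun :: "nat \<Rightarrow> complex \<Rightarrow> complex" where
  "Ffun p s = (of_nat p - 1) * wfun p s / (1 - wfun p s)"

lemma zeta_eq:
  assumes "p \<ge> 2"
  shows "zeta_term p s b = exp (- of_nat (fst b) * of_real (ln (real p)) * s)"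
proof -
  have pos: "0 < real p powr (- real (fst b))" using assms by simp
  have "zeta_term p s b = exp (s * ln (complex_of_real (real p powr (- real (fst b)))))"
    unfolding zeta_term_def ball_length_def powr_def using pos by simp
  also have "ln (complex_of_real (real p powr (- real (fst b)))) = of_real (ln (real p powr (- real (fst b))))"
    using pos by (simp add: Ln_of_real)
  also have "ln (real p powr (- real (fst b))) = - real (fst b) * ln (real p)" by (simp add: ln_powr)
  finally show ?thesis by (simp add: algebra_simps)
qed

lemma norm_zeta: "norm (zeta_term p s b) = ball_length p b powr Re s"
proof -
  have "norm (complex_of_real (ball_length p b) powr s) = Re (complex_of_real (ball_length p b)) powr Re s"
    by (rule norm_powr_real_powr) (auto simp: ball_length_def)
  then show ?thesis by (simp add: zeta_term_def)
qed

lemma level_complex: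
  assumes "p \<ge> 2"
  shows "of_nat (card (Rset p j)) * exp (- of_nat (2*j+2) * of_real (ln (real p)) * s)
       = (of_nat p - 1) * wfun p s ^ (j+1)"
proof -
  let ?L = "complex_of_real (ln (real p))"
  have pL: "exp ?L = of_nat p" by (subst exp_of_real) (use assms in simp)
  have c: "(of_nat (card (Rset p j)) :: complex) = (of_nat p - 1) * of_nat p ^ (j+1)"
    using card_Rset(1)[of p j] assms by (simp add: of_nat_diff)
  have "(of_nat p :: complex) ^ (j+1) * exp (- of_nat (2*j+2) * ?L * s)
      = exp (of_nat (j+1) * ?L) * exp (- of_nat (2*j+2) * ?L * s)"
    by (simp only: exp_of_nat_mult pL)
  also have "\<dots> = exp (of_nat (j+1) * ((1 - 2 * s) * ?L))"
    by (simp add: exp_add[symmetric] algebra_simps)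
  also have "\<dots> = wfun p s ^ (j+1)" unfolding wfun_def by (rule exp_of_nat_mult)
  finally show ?thesis using c by (simp add: mult.assoc)
qed

lemma norm_wfun: "norm (wfun p s) = exp ((1 - 2 * Re s) * ln (real p))"
  unfolding wfun_def by simp

lemma has_sum_complex:
  assumes "p \<ge> 2" "Re s > 1/2"
  shows "(zeta_term p s has_sum Ffun p s) (psi ` (SIGMA j:UNIV. Rset p j))"
proof -
  have p0: "p > 0" using assms by simp
  let ?w = "wfun p s"
  have nw: "norm ?w < 1"
  proof -
    have "(1 - 2 * Re s) * ln (real p) < 0" using assms by (intro mult_neg_pos) auto
    then show ?thesis unfolding norm_wfun by simp
  qed
  have abs: "(\<lambda>b. norm (zeta_term p s b)) summable_on (psi ` (SIGMA j:UNIV. Rset p j))"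
    unfolding norm_zeta using summable_real[OF assms(1,2)] .
  then have sm: "zeta_term p s summable_on (psi ` (SIGMA j:UNIV. Rset p j))"
    by (rule abs_summable_summable)
  then have sm2: "(zeta_term p s \<circ> psi) summable_on (SIGMA j:UNIV. Rset p j)"
    using summable_on_reindex[OF inj_psi] by blast
  define G where "G = (\<lambda>j. exp (- of_nat (2*j+2) * of_real (ln (real p)) * s) :: complex)"
  have inner: "((\<lambda>r. (zeta_term p s \<circ> psi) (j, r)) has_sum (of_nat (card (Rset p j)) * G j)) (Rset p j)" for j
  proof -
    have "((\<lambda>r. (zeta_term p s \<circ> psi) (j, r)) has_sum (\<Sum>r\<in>Rset p j. G j)) (Rset p j)"
    proof -
      have "(\<lambda>r. (zeta_term p s \<circ> psi) (j, r)) = (\<lambda>r. G j)"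
        by (rule ext) (simp add: zeta_eq[OF assms(1)] psi_def G_def)
      then show ?thesis using has_sum_finite[OF card_Rset(2)[OF p0, of j], of "\<lambda>r. G j"] by simp
    qed
    then show ?thesis by simp
  qed
  have outer: "((\<lambda>j. of_nat (card (Rset p j)) * G j) has_sum Ffun p s) UNIV"
  proof -
    have eq: "(\<lambda>j. of_nat (card (Rset p j)) * G j) = (\<lambda>j. ((of_nat p - 1) * ?w) * ?w ^ j)"
    proof (rule ext)
      fix j
      have "of_nat (card (Rset p j)) * G j = (of_nat p - 1) * ?w ^ (j+1)"
        unfolding G_def by (rule level_complex[OF assms(1)])
      also have "\<dots> = ((of_nat p - 1) * ?w) * ?w ^ j" by (simp add: algebra_simps)
      finally show "of_nat (card (Rset p j)) * G j = ((of_nat p - 1) * ?w) * ?w ^ j" .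
    qed
    have "(\<lambda>j. ?w ^ j) sums (1 / (1 - ?w))" using nw by (rule geometric_sums)
    then have "(\<lambda>j. ((of_nat p - 1) * ?w) * ?w ^ j) sums (((of_nat p - 1) * ?w) * (1 / (1 - ?w)))"
      by (rule sums_mult)
    moreover have "((of_nat p - 1) * ?w) * (1 / (1 - ?w)) = Ffun p s" unfolding Ffun_def by simp
    moreover have "summable (\<lambda>j. norm (((of_nat p - 1) * ?w) * ?w ^ j))"
      unfolding norm_mult norm_power using nw
      by (intro summable_mult) (auto simp: summable_geometric)
    ultimately show ?thesis unfolding eq by (intro norm_summable_imp_has_sum) auto
  qed
  have "((zeta_term p s \<circ> psi) has_sum Ffun p s) (SIGMA j:UNIV. Rset p j)"
    by (rule has_sum_SigmaI[OF inner outer sm2])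
  then show ?thesis using has_sum_reindex[OF inj_psi] by blast
qed


lemma w_eq_1_iff:
  assumes "p \<ge> 2"
  shows "wfun p z = 1 \<longleftrightarrow> (\<exists>n::int. z = Complex (1/2) (real_of_int n * pi / ln (real p)))"
proof -
  define L where "L = ln (real p)"
  have L0: "L > 0" unfolding L_def using assms by simp
  have re: "Re ((1 - 2 * z) * complex_of_real L) = (1 - 2 * Re z) * L" by simp
  have im: "Im ((1 - 2 * z) * complex_of_real L) = - 2 * Im z * L" by simp
  have "wfun p z = 1 \<longleftrightarrow> (1 - 2 * Re z) * L = 0 \<and> (\<exists>n::int. - 2 * Im z * L = real_of_int (2 * n) * pi)"
    unfolding wfun_def L_def[symmetric] exp_eq_1 re im by simp
  also have "\<dots> \<longleftrightarrow> (\<exists>n::int. z = Complex (1/2) (real_of_int n * pi / L))"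
  proof
    assume h: "(1 - 2 * Re z) * L = 0 \<and> (\<exists>n::int. - 2 * Im z * L = real_of_int (2 * n) * pi)"
    then obtain n :: int where n: "- 2 * Im z * L = real_of_int (2 * n) * pi" by blast
    have "Re z = 1/2" using h L0 by simp
    moreover have "Im z = real_of_int (- n) * pi / L" using n L0 by (simp add: field_simps)
    ultimately have "z = Complex (1/2) (real_of_int (- n) * pi / L)" by (simp add: complex_eq_iff)
    then show "\<exists>n::int. z = Complex (1/2) (real_of_int n * pi / L)" by blast
  next
    assume "\<exists>n::int. z = Complex (1/2) (real_of_int n * pi / L)"
    then obtain n :: int where z: "z = Complex (1/2) (real_of_int n * pi / L)" by blast
    have "- 2 * Im z * L = real_of_int (2 * (- n)) * pi" using z L0 by simp
    moreover have "(1 - 2 * Re z) * L = 0" using z by simp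
    ultimately show "(1 - 2 * Re z) * L = 0 \<and> (\<exists>n::int. - 2 * Im z * L = real_of_int (2 * n) * pi)" by blast
  qed
  finally show ?thesis by (simp only: L_def)
qed

lemma wfun_analytic: "wfun p analytic_on S"
  unfolding wfun_def by (intro analytic_intros)

lemma Ffun_eq: "Ffun p = (\<lambda>s. ((of_nat p - 1) * wfun p s) / (1 - wfun p s))"
  by (rule ext) (simp add: Ffun_def)

lemma Ffun_meromorphic: "Ffun p meromorphic_on UNIV"
  unfolding Ffun_eq
  by (intro meromorphic_on_divide analytic_on_imp_meromorphic_on analytic_intros wfun_analytic)

lemma wfun_isCont: "isCont (wfun p) z"
  unfolding wfun_def by (intro continuous_intros)

lemma Ffun_pole:
  assumes "p \<ge> 2" "wfun p z = 1"
  shows "is_pole (Ffun p) z"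
proof -
  define L where "L = ln (real p)"
  have L0: "L > 0" unfolding L_def using assms by simp
  have c1: "isCont (\<lambda>s. (of_nat p - 1) * wfun p s) z" using wfun_isCont by (intro continuous_intros) auto
  have "isCont (\<lambda>s. 1 - wfun p s) z" using wfun_isCont by (intro continuous_intros) auto
  then have t: "((\<lambda>s. 1 - wfun p s) \<longlongrightarrow> 0) (at z)" using assms(2) by (metis isCont_def diff_self)
  have ev: "eventually (\<lambda>s. 1 - wfun p s \<noteq> 0) (at z)"
    unfolding eventually_at
  proof (intro exI[of _ "pi / L"] conjI ballI impI)
    show "pi / L > 0" using L0 by simp
    fix s assume "s \<in> UNIV" and s: "s \<noteq> z \<and> dist s z < pi / L"
    show "1 - wfun p s \<noteq> 0"
    proof
      assume "1 - wfun p s = 0"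
      then have "wfun p s = 1" by simp
      then obtain m :: int where m: "s = Complex (1/2) (real_of_int m * pi / L)"
        using w_eq_1_iff[OF assms(1)] L_def by blast
      obtain n :: int where n: "z = Complex (1/2) (real_of_int n * pi / L)"
        using w_eq_1_iff[OF assms(1)] assms(2) L_def by blast
      have "m \<noteq> n" using s m n by auto
      then have "1 \<le> \<bar>real_of_int m - real_of_int n\<bar>" by linarith
      then have "pi / L \<le> \<bar>real_of_int m - real_of_int n\<bar> * pi / L"
        using L0 by (simp add: divide_right_mono)
      also have "\<dots> = dist s z"
      proof -
        have "s - z = Complex 0 ((real_of_int m - real_of_int n) * pi / L)"
          using m n by (simp add: complex_eq_iff diff_divide_distrib left_diff_distrib)
        then have "dist s z = \<bar>(real_of_int m - real_of_int n) * pi / L\<bar>"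
          by (simp add: dist_norm cmod_def)
        also have "\<dots> = \<bar>real_of_int m - real_of_int n\<bar> * pi / L"
          using L0 by (simp add: abs_mult)
        finally show ?thesis by simp
      qed
      finally show False using s by simp
    qed
  qed
  have f: "filterlim (\<lambda>s. 1 - wfun p s) (at 0) (at z)" by (rule filterlim_atI[OF t ev])
  have nz: "(of_nat p - 1) * wfun p z \<noteq> 0" using assms by simp
  show ?thesis unfolding Ffun_eq by (rule is_pole_divide[OF c1 f nz])
qed

lemma Ffun_nopole:
  assumes "wfun p z \<noteq> 1"
  shows "\<not> is_pole (Ffun p) z"
proof -
  have "Ffun p analytic_on {z}"
    unfolding Ffun_eq using assms by (intro analytic_intros wfun_analytic) auto
  then show ?thesis by (rule analytic_at_imp_no_pole)
qed

lemma poles_Ffun: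
  assumes "p \<ge> 2"
  shows "{z. is_pole (Ffun p) z} = {Complex (1/2) (real_of_int n * pi / ln (real p)) | n::int. True}"
proof -
  have "is_pole (Ffun p) z \<longleftrightarrow> wfun p z = 1" for z
    using Ffun_pole[OF assms] Ffun_nopole by blast
  then show ?thesis using w_eq_1_iff[OF assms] by auto
qed


theorem theorem3p1:
  fixes p :: nat
  assumes "prime p"
  shows "\<exists>(N::nat) (m::nat) (c::nat \<Rightarrow> int) K.
    N \<ge> 2 \<and> m \<ge> 1 \<and>
    K \<subseteq> Zp p \<and> K \<noteq> {} \<and> compact K \<and>
    K = (\<Union>i<N. padic_sim p (c i) m ` K) \<and>
    (\<forall>K'. K' \<subseteq> Zp p \<and> K' \<noteq> {} \<and> compact K' \<and>
          K' = (\<Union>i<N. padic_sim p (c i) m ` K') \<longrightarrow> K' = K) \<and>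
    (let L = maximal_balls p (Zp p - K) in
      (\<forall>\<sigma>::real. \<sigma> > 1/2 \<longrightarrow> (\<lambda>b. ball_length p b powr \<sigma>) summable_on L) \<and>
      (\<forall>\<sigma>::real. \<sigma> < 1/2 \<longrightarrow> \<not> ((\<lambda>b. ball_length p b powr \<sigma>) summable_on L)) \<and>
      (\<exists>f. f meromorphic_on UNIV \<and>
           (\<forall>s. Re s > 1/2 \<longrightarrow> (zeta_term p s has_sum f s) L) \<and>
           {z. is_pole f z} =
             {Complex (1/2) (real_of_int n * pi / ln (real p)) | n::int. True}))"
proof -
  have p2: "p \<ge> 2" using assms by (rule prime_ge_2_nat)
  then have p0: "p > 0" by simp
  have sub: "Kset p \<subseteq> Zp p" by (auto simp: Kset_def)
  have ne: "Kset p \<noteq> {}"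
  proof -
    have "(\<lambda>_. 0) \<in> Kset p" using p0 by (auto simp: Kset_def Zp_def)
    then show ?thesis by blast
  qed
  have uniq: "\<forall>K'. K' \<subseteq> Zp p \<and> K' \<noteq> {} \<and> compact K' \<and>
          K' = (\<Union>i<p. padic_sim p ((\<lambda>i. int i) i) 2 ` K') \<longrightarrow> K' = Kset p"
    using unique_K[OF p0] by auto
  have L: "maximal_balls p (Zp p - Kset p) = psi ` (SIGMA j:UNIV. Rset p j)" by (rule L_char2[OF p0])
  have main: "(\<forall>\<sigma>::real. \<sigma> > 1/2 \<longrightarrow> (\<lambda>b. ball_length p b powr \<sigma>) summable_on (psi ` (SIGMA j:UNIV. Rset p j))) \<and>
      (\<forall>\<sigma>::real. \<sigma> < 1/2 \<longrightarrow> \<not> ((\<lambda>b. ball_length p b powr \<sigma>) summable_on (psi ` (SIGMA j:UNIV. Rset p j)))) \<and>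
      (\<exists>f. f meromorphic_on UNIV \<and>
           (\<forall>s. Re s > 1/2 \<longrightarrow> (zeta_term p s has_sum f s) (psi ` (SIGMA j:UNIV. Rset p j))) \<and>
           {z. is_pole f z} =
             {Complex (1/2) (real_of_int n * pi / ln (real p)) | n::int. True})"
    using summable_real[OF p2] not_summable_real[OF p2] Ffun_meromorphic has_sum_complex[OF p2]
      poles_Ffun[OF p2] by blast
  have eqU: "Kset p = (\<Union>i<p. padic_sim p ((\<lambda>i. int i) i) 2 ` Kset p)"
    using K_eq_union[OF p0] by simp
  have m2: "(2::nat) \<ge> 1" by simp
  have main': "let L = maximal_balls p (Zp p - Kset p) in
      (\<forall>\<sigma>::real. \<sigma> > 1/2 \<longrightarrow> (\<lambda>b. ball_length p b powr \<sigma>) summable_on L) \<and>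
      (\<forall>\<sigma>::real. \<sigma> < 1/2 \<longrightarrow> \<not> ((\<lambda>b. ball_length p b powr \<sigma>) summable_on L)) \<and>
      (\<exists>f. f meromorphic_on UNIV \<and>
           (\<forall>s. Re s > 1/2 \<longrightarrow> (zeta_term p s has_sum f s) L) \<and>
           {z. is_pole f z} =
             {Complex (1/2) (real_of_int n * pi / ln (real p)) | n::int. True})"
    unfolding Let_def L by (rule main)
  show ?thesis
    by (rule exI[of _ p], rule exI[of _ 2], rule exI[of _ "\<lambda>i. int i"], rule exI[of _ "Kset p"])
      (intro conjI p2 m2 sub ne compact_Kset eqU uniq main')
qed

end
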